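(* Let $S_n=(E_{n-m},K_m)$ be a word-representable split graph with $m\geq 4$, and let $d$ be an integer with $\frac{m+1}{2}< d\leq m-1$. Then $E_{n-m}$ contains at most $m-d+1$ vertices of degree $d$ having pairwise distinct neighbourhoods. Moreover, this bound is achievable: for every such $m$ and $d$ there is a word-representable split graph $(E_{n-m},K_m)$ whose independent set contains $m-d+1$ vertices of degree $d$ with pairwise distinct neighbourhoods.
   Context: A graph $G=(V,E)$ is word-representable if there exists a word $w$ over the alphabet $V$ such that for all distinct $x,y\in V$, the letters $x$ and $y$ alternate in $w$ if and only if $xy\in E$ (alternation meaning that deleting all letters other than $x$ and $y$ leaves $xyxy\cdots$ or $yxyx\cdots$). The notation $S_n=(E_{n-m},K_m)$ denotes a split graph on $n$ vertices whose vertex set is partitioned into a maximal clique $K_m$ on $m$ vertices and an independent set $E_{n-m}$ on $n-m$ vertices. *)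

theory Defs
  imports Main
begin

definition simple_graph :: "'a set \<Rightarrow> ('a \<Rightarrow> 'a \<Rightarrow> bool) \<Rightarrow> bool" where
  "simple_graph V E \<longleftrightarrow> finite V \<and> (\<forall>x y. E x y \<longrightarrow> x \<in> V \<and> y \<in> V)
     \<and> (\<forall>x y. E x y \<longrightarrow> E y x) \<and> (\<forall>x. \<not> E x x)"

definition alternate_in :: "'a list \<Rightarrow> 'a \<Rightarrow> 'a \<Rightarrow> bool" where
  "alternate_in w x y \<longleftrightarrow>
     (let u = filter (\<lambda>z. z = x \<or> z = y) w in \<forall>i. Suc i < length u \<longrightarrow> u ! i \<noteq> u ! Suc i)"

definition word_represents :: "'a set \<Rightarrow> ('a \<Rightarrow> 'a \<Rightarrow> bool) \<Rightarrow> 'a list \<Rightarrow> bool" where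
  "word_represents V E w \<longleftrightarrow> set w = V \<and>
     (\<forall>x\<in>V. \<forall>y\<in>V. x \<noteq> y \<longrightarrow> (alternate_in w x y \<longleftrightarrow> E x y))"

definition word_representable :: "'a set \<Rightarrow> ('a \<Rightarrow> 'a \<Rightarrow> bool) \<Rightarrow> bool" where
  "word_representable V E \<longleftrightarrow> (\<exists>w. word_represents V E w)"

definition is_clique :: "'a set \<Rightarrow> ('a \<Rightarrow> 'a \<Rightarrow> bool) \<Rightarrow> 'a set \<Rightarrow> bool" where
  "is_clique V E K \<longleftrightarrow> K \<subseteq> V \<and> (\<forall>x\<in>K. \<forall>y\<in>K. x \<noteq> y \<longrightarrow> E x y)"

definition is_maximal_clique :: "'a set \<Rightarrow> ('a \<Rightarrow> 'a \<Rightarrow> bool) \<Rightarrow> 'a set \<Rightarrow> bool" where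
  "is_maximal_clique V E K \<longleftrightarrow> is_clique V E K \<and> (\<forall>v\<in>V - K. \<not> (\<forall>x\<in>K. E v x))"

definition is_independent :: "'a set \<Rightarrow> ('a \<Rightarrow> 'a \<Rightarrow> bool) \<Rightarrow> 'a set \<Rightarrow> bool" where
  "is_independent V E I \<longleftrightarrow> I \<subseteq> V \<and> (\<forall>x\<in>I. \<forall>y\<in>I. \<not> E x y)"

definition split_graph :: "'a set \<Rightarrow> ('a \<Rightarrow> 'a \<Rightarrow> bool) \<Rightarrow> 'a set \<Rightarrow> 'a set \<Rightarrow> bool" where
  "split_graph V E I K \<longleftrightarrow> simple_graph V E \<and> is_maximal_clique V E K \<and> is_independent V E I
     \<and> K \<inter> I = {} \<and> K \<union> I = V"

definition neighbourhood :: "'a set \<Rightarrow> ('a \<Rightarrow> 'a \<Rightarrow> bool) \<Rightarrow> 'a \<Rightarrow> 'a set" where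
  "neighbourhood V E v = {u \<in> V. E v u}"

definition degree :: "'a set \<Rightarrow> ('a \<Rightarrow> 'a \<Rightarrow> bool) \<Rightarrow> 'a \<Rightarrow> nat" where
  "degree V E v = card (neighbourhood V E v)"

end

theory Submission
  imports Defs
begin


definition Hc :: "'a list \<Rightarrow> 'a \<Rightarrow> nat \<Rightarrow> int" where
  "Hc w x i = int (count_list (take i w) x)"

definition rel :: "(nat \<Rightarrow> int) \<Rightarrow> (nat \<Rightarrow> int) \<Rightarrow> bool" where
  "rel f g \<longleftrightarrow> (\<forall>i. g i \<le> f i \<and> f i \<le> g i + 1)"

definition altl :: "'a list \<Rightarrow> bool" where
  "altl u \<longleftrightarrow> (\<forall>i. Suc i < length u \<longrightarrow> u ! i \<noteq> u ! Suc i)"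

lemma altl_Nil[simp]: "altl []" by (simp add: altl_def)

lemma altl_Cons: "altl (a # u) \<longleftrightarrow> altl u \<and> (u = [] \<or> hd u \<noteq> a)"
proof -
  have "altl (a # u) \<longleftrightarrow> (\<forall>i. Suc i < Suc (length u) \<longrightarrow> (a#u) ! i \<noteq> (a#u) ! Suc i)"
    by (simp add: altl_def)
  also have "\<dots> \<longleftrightarrow> (u = [] \<or> u ! 0 \<noteq> a) \<and> altl u"
    unfolding altl_def
    apply (rule iffI)
     apply (intro conjI)
      apply (cases u; force)
     apply (intro allI impI)
    subgoal for i by (drule spec[of _ "Suc i"]) auto
    apply (intro allI impI)
    subgoal for i by (cases i) auto
    done
  finally show ?thesis by (cases u) auto
qed

lemma altl_simps[simp]: "altl [a]" "altl (a # b # u) \<longleftrightarrow> a \<noteq> b \<and> altl (b # u)"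
  by (auto simp: altl_Cons)

lemma list_alt:
  "x \<noteq> y \<Longrightarrow> set u \<subseteq> {x, y} \<Longrightarrow>
   (\<forall>j. 0 \<le> int (count_list (take j u) x) - int (count_list (take j u) y)
        \<and> int (count_list (take j u) x) - int (count_list (take j u) y) \<le> 1)
   \<longleftrightarrow> altl u \<and> (u = [] \<or> hd u = x)"
proof (induction u arbitrary: x y)
  case Nil
  then show ?case by simp
next
  case (Cons z u)
  have su: "set u \<subseteq> {x, y}" using Cons.prems by auto
  show ?case
  proof (cases "z = x")
    case True
    have ih: "(\<forall>j. 0 \<le> int (count_list (take j u) y) - int (count_list (take j u) x)
        \<and> int (count_list (take j u) y) - int (count_list (take j u) x) \<le> 1)
      \<longleftrightarrow> altl u \<and> (u = [] \<or> hd u = y)"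
      using Cons.IH[of y x] Cons.prems su by auto
    have "(\<forall>j. 0 \<le> int (count_list (take j (z#u)) x) - int (count_list (take j (z#u)) y)
        \<and> int (count_list (take j (z#u)) x) - int (count_list (take j (z#u)) y) \<le> 1)
      \<longleftrightarrow> (\<forall>j. 0 \<le> int (count_list (take j u) y) - int (count_list (take j u) x)
        \<and> int (count_list (take j u) y) - int (count_list (take j u) x) \<le> 1)"
    proof
      assume h: "\<forall>j. 0 \<le> int (count_list (take j (z#u)) x) - int (count_list (take j (z#u)) y)
        \<and> int (count_list (take j (z#u)) x) - int (count_list (take j (z#u)) y) \<le> 1"
      show "\<forall>j. 0 \<le> int (count_list (take j u) y) - int (count_list (take j u) x)
        \<and> int (count_list (take j u) y) - int (count_list (take j u) x) \<le> 1"
      proof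
        fix j show "0 \<le> int (count_list (take j u) y) - int (count_list (take j u) x)
        \<and> int (count_list (take j u) y) - int (count_list (take j u) x) \<le> 1"
          using h[rule_format, of "Suc j"] True Cons.prems by auto
      qed
    next
      assume h: "\<forall>j. 0 \<le> int (count_list (take j u) y) - int (count_list (take j u) x)
        \<and> int (count_list (take j u) y) - int (count_list (take j u) x) \<le> 1"
      show "\<forall>j. 0 \<le> int (count_list (take j (z#u)) x) - int (count_list (take j (z#u)) y)
        \<and> int (count_list (take j (z#u)) x) - int (count_list (take j (z#u)) y) \<le> 1"
      proof
        fix j show "0 \<le> int (count_list (take j (z#u)) x) - int (count_list (take j (z#u)) y)
        \<and> int (count_list (take j (z#u)) x) - int (count_list (take j (z#u)) y) \<le> 1"
          using h[rule_format, of "j - 1"] True Cons.prems by (cases j) auto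
      qed
    qed
    also have "\<dots> \<longleftrightarrow> altl (z # u) \<and> (z # u = [] \<or> hd (z # u) = x)"
      using ih True su Cons.prems by (cases u) (auto simp: altl_Cons)
    finally show ?thesis .
  next
    case False
    then have zy: "z = y" using Cons.prems by auto
    have "\<not> (0 \<le> int (count_list (take 1 (z#u)) x) - int (count_list (take 1 (z#u)) y))"
      using zy Cons.prems by auto
    moreover have "hd (z#u) \<noteq> x" using False by simp
    ultimately show ?thesis by blast
  qed
qed


lemma count_filter: "P x \<Longrightarrow> count_list (filter P l) x = count_list l x"
  by (induction l) auto

lemma take_filter_ex: "\<exists>i. take j (filter P w) = filter P (take i w)"
proof (induction w arbitrary: j)
  case Nil then show ?case by simp
next
  case (Cons z w)
  show ?case
  proof (cases "P z")
    case True
    show ?thesis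
    proof (cases j)
      case 0 then show ?thesis by (intro exI[of _ 0]) simp
    next
      case (Suc j')
      obtain i where "take j' (filter P w) = filter P (take i w)" using Cons.IH by blast
      then show ?thesis using True Suc by (intro exI[of _ "Suc i"]) simp
    qed
  next
    case False
    obtain i where "take j (filter P w) = filter P (take i w)" using Cons.IH by blast
    then show ?thesis using False by (intro exI[of _ "Suc i"]) simp
  qed
qed

lemma filter_take_eq: "filter P (take i w) = take (length (filter P (take i w))) (filter P w)"
proof -
  have "filter P w = filter P (take i w) @ filter P (drop i w)"
    by (metis append_take_drop_id filter_append)
  then show ?thesis by (metis append_eq_conv_conj)
qed

lemma alt_iff_rel:
  assumes "x \<noteq> y"
  shows "alternate_in w x y \<longleftrightarrow> rel (Hc w x) (Hc w y) \<or> rel (Hc w y) (Hc w x)"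
proof -
  define P where "P = (\<lambda>z. z = x \<or> z = y)"
  define u where "u = filter P w"
  have su: "set u \<subseteq> {x, y}" by (auto simp: u_def P_def)
  have tr: "rel (Hc w a) (Hc w b) \<longleftrightarrow>
     (\<forall>j. 0 \<le> int (count_list (take j u) a) - int (count_list (take j u) b)
        \<and> int (count_list (take j u) a) - int (count_list (take j u) b) \<le> 1)"
    if ab: "P a" "P b" for a b
  proof
    assume h: "rel (Hc w a) (Hc w b)"
    show "\<forall>j. 0 \<le> int (count_list (take j u) a) - int (count_list (take j u) b)
        \<and> int (count_list (take j u) a) - int (count_list (take j u) b) \<le> 1"
    proof
      fix j
      obtain i where i: "take j u = filter P (take i w)" using take_filter_ex u_def by blast
      show "0 \<le> int (count_list (take j u) a) - int (count_list (take j u) b)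
        \<and> int (count_list (take j u) a) - int (count_list (take j u) b) \<le> 1"
        using h[unfolded rel_def, rule_format, of i] ab
        by (simp add: i count_filter Hc_def)
    qed
  next
    assume h: "\<forall>j. 0 \<le> int (count_list (take j u) a) - int (count_list (take j u) b)
        \<and> int (count_list (take j u) a) - int (count_list (take j u) b) \<le> 1"
    show "rel (Hc w a) (Hc w b)"
      unfolding rel_def
    proof
      fix i
      have e: "filter P (take i w) = take (length (filter P (take i w))) u"
        using filter_take_eq u_def by metis
      show "Hc w b i \<le> Hc w a i \<and> Hc w a i \<le> Hc w b i + 1"
        using h[rule_format, of "length (filter P (take i w))"] ab
        unfolding Hc_def
        by (simp add: e[symmetric] count_filter)
    qed
  qed
  have "alternate_in w x y \<longleftrightarrow> altl u"
    by (simp add: alternate_in_def altl_def u_def P_def Let_def)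
  also have "\<dots> \<longleftrightarrow> (altl u \<and> (u = [] \<or> hd u = x)) \<or> (altl u \<and> (u = [] \<or> hd u = y))"
    using su by (cases u) auto
  also have "\<dots> \<longleftrightarrow> rel (Hc w x) (Hc w y) \<or> rel (Hc w y) (Hc w x)"
    using list_alt[OF assms su] list_alt[of y x u] assms su tr[of x y] tr[of y x]
    by (auto simp: P_def)
  finally show ?thesis .
qed

lemma Hc_0[simp]: "Hc w x 0 = 0" by (simp add: Hc_def)

lemma Hc_distinct:
  assumes "x \<in> set w" "x \<noteq> y"
  shows "\<exists>t. Hc w x t \<noteq> Hc w y t"
proof (rule ccontr)
  assume "\<not> ?thesis"
  then have eq: "\<And>t. Hc w x t = Hc w y t" by auto
  obtain p where p: "p < length w" "w ! p = x" using assms(1) by (metis in_set_conv_nth)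
  have "take (Suc p) w = take p w @ [x]" using p by (simp add: take_Suc_conv_app_nth)
  then have "Hc w x (Suc p) = Hc w x p + 1" "Hc w y (Suc p) = Hc w y p"
    using assms(2) by (auto simp: Hc_def)
  then show False using eq[of p] eq[of "Suc p"] by simp
qed


lemma rel_antisym_H:
  assumes "x \<in> set w" "x \<noteq> y" "rel (Hc w x) (Hc w y)" "rel (Hc w y) (Hc w x)"
  shows False
proof -
  have "\<And>t. Hc w x t = Hc w y t" using assms(3,4) unfolding rel_def
    by (meson order_antisym)
  then show False using Hc_distinct[OF assms(1,2)] by auto
qed

lemma div_range:
  assumes "(k::int) > 0" "0 \<le> n" "n < 2 * k"
  shows "n div k = 0 \<or> n div k = 1"
proof (cases "n < k")
  case True then show ?thesis using assms by simp
next
  case False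
  have "n div k = (n - k + k) div k" by simp
  also have "\<dots> = (n - k) div k + 1" using assms(1) by (rule div_add_self2[OF order.strict_implies_not_eq[symmetric]])
  also have "(n - k) div k = 0" using assms False by (intro div_pos_pos_trivial) auto
  finally show ?thesis by simp
qed

lemma katona:
  fixes T :: "int set" and M r :: int
  assumes T: "T \<subseteq> {0..<M}" and rM: "2 * r + 2 \<le> M" and r0: "0 \<le> r"
    and pw: "\<forall>u\<in>T. \<forall>v\<in>T. \<not> (r + 1 \<le> (v - u) mod M \<and> (v - u) mod M \<le> M - r - 1)"
  shows "card T \<le> nat (r + 1)"
proof (cases "T = {}")
  case True then show ?thesis by simp
next
  case False
  then obtain u0 where u0: "u0 \<in> T" by blast
  have M0: "M > 0" using rM r0 by simp
  define tt where "tt = (\<lambda>v. (v - u0) mod M)"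
  define \<phi> where "\<phi> = (\<lambda>v. if tt v \<le> r then tt v else tt v - (M - r - 1))"
  have trange: "0 \<le> tt v" "tt v < M" for v unfolding tt_def using M0 by auto
  have tcase: "v \<in> T \<Longrightarrow> tt v \<le> r \<or> M - r \<le> tt v" for v
  proof -
    assume v: "v \<in> T"
    have "\<not> (r + 1 \<le> (v - u0) mod M \<and> (v - u0) mod M \<le> M - r - 1)" using pw u0 v by blast
    then show ?thesis unfolding tt_def by linarith
  qed
  have rng: "v \<in> T \<Longrightarrow> \<phi> v \<in> {0..r}" for v
    using tcase[of v] trange[of v] unfolding \<phi>_def by auto
  have same: "v \<in> T \<Longrightarrow> v' \<in> T \<Longrightarrow> tt v = tt v' \<Longrightarrow> v = v'" for v v'
  proof -
    assume vv: "v \<in> T" "v' \<in> T" "tt v = tt v'"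
    have "v mod M = ((v - u0) mod M + u0) mod M" by (simp add: mod_add_left_eq)
    also have "\<dots> = ((v' - u0) mod M + u0) mod M" using vv(3) unfolding tt_def by simp
    also have "\<dots> = v' mod M" by (simp add: mod_add_left_eq)
    finally have "v mod M = v' mod M" .
    moreover have "v mod M = v" "v' mod M = v'" using vv T by (auto intro: mod_pos_pos_trivial)
    ultimately show "v = v'" by simp
  qed
  have diffm: "(v' - v) mod M = (tt v' - tt v) mod M" for v v'
  proof -
    have "(v' - v) mod M = ((v' - u0) - (v - u0)) mod M" by simp
    also have "\<dots> = (tt v' - tt v) mod M" unfolding tt_def by (rule mod_diff_eq[symmetric])
    finally show ?thesis .
  qed
  have mixed: "v \<in> T \<Longrightarrow> v' \<in> T \<Longrightarrow> tt v \<le> r \<Longrightarrow> \<not> tt v' \<le> r \<Longrightarrow> tt v = tt v' - (M - r - 1) \<Longrightarrow> False" for v v'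
  proof -
    assume vv: "v \<in> T" "v' \<in> T" "tt v \<le> r" "\<not> tt v' \<le> r" "tt v = tt v' - (M - r - 1)"
    have e: "tt v' - tt v = M - r - 1" using vv(5) by simp
    have "(v' - v) mod M = (M - r - 1) mod M" using diffm[of v' v] unfolding e .
    also have "\<dots> = M - r - 1" using rM r0 by (intro mod_pos_pos_trivial) auto
    finally have "(v' - v) mod M = M - r - 1" .
    moreover have "\<not> (r + 1 \<le> (v' - v) mod M \<and> (v' - v) mod M \<le> M - r - 1)" using pw vv(1,2) by blast
    ultimately show False using rM by linarith
  qed
  have inj: "inj_on \<phi> T"
  proof (rule inj_onI)
    fix v v' assume vv: "v \<in> T" "v' \<in> T" "\<phi> v = \<phi> v'"
    show "v = v'"
    proof (cases "tt v \<le> r"; cases "tt v' \<le> r")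
      assume c: "tt v \<le> r" "tt v' \<le> r"
      then have "tt v = tt v'" using vv(3) unfolding \<phi>_def by simp
      then show ?thesis using vv(1,2) same by blast
    next
      assume c: "\<not> tt v \<le> r" "\<not> tt v' \<le> r"
      then have "tt v = tt v'" using vv(3) unfolding \<phi>_def by simp
      then show ?thesis using vv(1,2) same by blast
    next
      assume c: "tt v \<le> r" "\<not> tt v' \<le> r"
      then have "tt v = tt v' - (M - r - 1)" using vv(3) unfolding \<phi>_def by simp
      then show ?thesis using vv(1,2) c mixed[of v v'] by blast
    next
      assume c: "\<not> tt v \<le> r" "tt v' \<le> r"
      then have "tt v' = tt v - (M - r - 1)" using vv(3) unfolding \<phi>_def by simp
      then show ?thesis using vv(1,2) c mixed[of v' v] by blast
    qed
  qed
  have "card T = card (\<phi> ` T)" using inj by (simp add: card_image)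
  also have "\<dots> \<le> card {0..r}" using rng by (intro card_mono) auto
  also have "\<dots> = nat (r + 1)" by simp
  finally show ?thesis .
qed


locale wr =
  fixes V :: "'a set" and E :: "'a \<Rightarrow> 'a \<Rightarrow> bool" and w :: "'a list"
  assumes sg: "simple_graph V E" and rep: "word_represents V E w"
begin

abbreviation H where "H \<equiv> Hc w"

lemma setw: "set w = V" using rep by (simp add: word_represents_def)

lemma finV: "finite V" using sg by (simp add: simple_graph_def)

lemma EV: "E x y \<Longrightarrow> x \<in> V \<and> y \<in> V" using sg by (simp add: simple_graph_def)

lemma Esym: "E x y \<Longrightarrow> E y x" using sg by (simp add: simple_graph_def)

lemma adj: "x \<in> V \<Longrightarrow> y \<in> V \<Longrightarrow> x \<noteq> y \<Longrightarrow> E x y \<longleftrightarrow> rel (H x) (H y) \<or> rel (H y) (H x)"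
  using rep alt_iff_rel[of x y w] by (simp add: word_represents_def)

lemma rel_antisym: "x \<in> V \<Longrightarrow> x \<noteq> y \<Longrightarrow> rel (H x) (H y) \<Longrightarrow> rel (H y) (H x) \<Longrightarrow> False"
  using rel_antisym_H[of x w y] setw by blast

lemma labeling:
  assumes KV: "K \<subseteq> V" and cl: "\<forall>x\<in>K. \<forall>y\<in>K. x \<noteq> y \<longrightarrow> E x y" and cK: "card K = m"
  shows "\<exists>\<kappa>. bij_betw \<kappa> {..<m} K \<and> (\<forall>i j. i < j \<longrightarrow> j < m \<longrightarrow> rel (H (\<kappa> i)) (H (\<kappa> j)))"
proof -
  have finK: "finite K" using KV finV finite_subset by blast
  define pr where "pr = (\<lambda>x y. x \<noteq> y \<and> rel (H x) (H y))"
  have tot: "x \<in> K \<Longrightarrow> y \<in> K \<Longrightarrow> x \<noteq> y \<Longrightarrow> pr x y \<or> pr y x" for x y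
    using cl adj KV unfolding pr_def by blast
  have asym: "x \<in> K \<Longrightarrow> pr x y \<Longrightarrow> pr y x \<Longrightarrow> False" for x y
    using rel_antisym KV unfolding pr_def by blast
  have trans: "x \<in> K \<Longrightarrow> y \<in> K \<Longrightarrow> z \<in> K \<Longrightarrow> pr x y \<Longrightarrow> pr y z \<Longrightarrow> pr x z" for x y z
  proof -
    assume xyz: "x \<in> K" "y \<in> K" "z \<in> K" and p: "pr x y" "pr y z"
    have xz: "x \<noteq> z"
    proof
      assume "x = z"
      then show False using asym[OF xyz(1)] p by blast
    qed
    show "pr x z"
    proof (rule ccontr)
      assume "\<not> pr x z"
      then have "rel (H z) (H x)" using tot[OF xyz(1,3) xz] xz unfolding pr_def by auto
      then have "\<And>t. H x t = H z t" using p unfolding pr_def rel_def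
        by (meson order_antisym order_trans)
      then show False using Hc_distinct[of x w z] xz xyz KV setw by auto
    qed
  qed
  define rk where "rk = (\<lambda>x. card {y\<in>K. pr y x})"
  have rk_less: "x \<in> K \<Longrightarrow> y \<in> K \<Longrightarrow> pr x y \<Longrightarrow> rk x < rk y" for x y
  proof -
    assume xy: "x \<in> K" "y \<in> K" "pr x y"
    have "{z\<in>K. pr z x} \<subset> {z\<in>K. pr z y}"
    proof
      show "{z\<in>K. pr z x} \<subseteq> {z\<in>K. pr z y}" using trans xy by blast
      have "x \<notin> {z\<in>K. pr z x}" using asym xy by blast
      moreover have "x \<in> {z\<in>K. pr z y}" using xy by blast
      ultimately show "{z\<in>K. pr z x} \<noteq> {z\<in>K. pr z y}" by blast
    qed
    then show ?thesis unfolding rk_def using finK by (simp add: psubset_card_mono)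
  qed
  have rk_m: "x \<in> K \<Longrightarrow> rk x < m" for x
  proof -
    assume x: "x \<in> K"
    have "{z\<in>K. pr z x} \<subseteq> K - {x}" using asym x by blast
    then have "rk x \<le> card (K - {x})" unfolding rk_def using finK by (simp add: card_mono)
    also have "\<dots> < m" using x cK finK
      by (metis card_Diff1_less)
    finally show ?thesis .
  qed
  have inj: "inj_on rk K"
  proof (rule inj_onI)
    fix x y assume "x \<in> K" "y \<in> K" "rk x = rk y"
    then show "x = y" using tot rk_less by (metis less_irrefl)
  qed
  have img: "rk ` K = {..<m}"
  proof (rule card_subset_eq)
    show "finite {..<m}" by simp
    show "rk ` K \<subseteq> {..<m}" using rk_m by auto
    show "card (rk ` K) = card {..<m}" using inj cK by (simp add: card_image)
  qed
  have bij: "bij_betw rk K {..<m}" using inj img by (simp add: bij_betw_def)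
  define \<kappa> where "\<kappa> = inv_into K rk"
  have bk: "bij_betw \<kappa> {..<m} K" unfolding \<kappa>_def by (rule bij_betw_inv_into[OF bij])
  have rkk: "i < m \<Longrightarrow> rk (\<kappa> i) = i" for i
    unfolding \<kappa>_def using img by (simp add: f_inv_into_f)
  have ord: "i < j \<Longrightarrow> j < m \<Longrightarrow> rel (H (\<kappa> i)) (H (\<kappa> j))" for i j
  proof -
    assume ij: "i < j" "j < m"
    have K: "\<kappa> i \<in> K" "\<kappa> j \<in> K" using bk ij by (auto simp: bij_betw_def)
    have ne: "\<kappa> i \<noteq> \<kappa> j" using rkk ij by (metis less_trans less_irrefl)
    have "\<not> pr (\<kappa> j) (\<kappa> i)" using rk_less[OF K(2) K(1)] rkk ij by fastforce
    then show ?thesis using tot[OF K ne] unfolding pr_def by auto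
  qed
  show ?thesis using bk ord by blast
qed

end


locale sctx = wr +
  fixes K I :: "'a set" and m :: nat and \<kappa> :: "nat \<Rightarrow> 'a"
  assumes KV: "K \<subseteq> V" and IK: "K \<inter> I = {}" and KIV: "K \<union> I = V"
    and indep: "\<forall>x\<in>I. \<forall>y\<in>I. \<not> E x y"
    and bk: "bij_betw \<kappa> {..<m} K"
    and ord: "\<forall>i j. i < j \<longrightarrow> j < m \<longrightarrow> rel (H (\<kappa> i)) (H (\<kappa> j))"
    and mpos: "0 < m"
begin

definition G :: "int \<Rightarrow> nat \<Rightarrow> int" where
  "G n t = H (\<kappa> (nat (n mod int m))) t - n div int m"

lemma kK: "i < m \<Longrightarrow> \<kappa> i \<in> K" using bk by (auto simp: bij_betw_def)

lemma kinj: "i < m \<Longrightarrow> j < m \<Longrightarrow> \<kappa> i = \<kappa> j \<Longrightarrow> i = j"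
  using bk by (auto simp: bij_betw_def inj_on_def)

lemma P1: "i < m \<Longrightarrow> j < m \<Longrightarrow> H (\<kappa> i) t \<le> H (\<kappa> j) t + 1"
  using ord unfolding rel_def
  by (metis add.commute add_increasing2 le_add_same_cancel1 linorder_neqE_nat order.refl zero_le_one)

lemma P2: "i \<le> j \<Longrightarrow> j < m \<Longrightarrow> H (\<kappa> j) t \<le> H (\<kappa> i) t"
  using ord unfolding rel_def
  by (metis order.refl order_le_less)

lemma G1:
  assumes "n \<le> p" shows "G p t \<le> G n t"
proof -
  define q where "q = n div int m"
  define q' where "q' = p div int m"
  define i where "i = n mod int m"
  define i' where "i' = p mod int m"
  have m: "int m > 0" using mpos by simp
  have qq: "q \<le> q'" unfolding q_def q'_def using assms m by (simp add: zdiv_mono1)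
  have ir: "0 \<le> i" "i < int m" "0 \<le> i'" "i' < int m" unfolding i_def i'_def using m by auto
  have n: "n = q * int m + i" and p: "p = q' * int m + i'"
    unfolding q_def q'_def i_def i'_def by simp_all
  show ?thesis
  proof (cases "q = q'")
    case True
    then have "i \<le> i'" using n p assms by simp
    then have "H (\<kappa> (nat i')) t \<le> H (\<kappa> (nat i)) t" using P2 ir by (simp add: nat_le_eq_zle nat_less_iff)
    then show ?thesis unfolding G_def using True q_def q'_def i_def i'_def by simp
  next
    case False
    then have "q + 1 \<le> q'" using qq by simp
    moreover have "H (\<kappa> (nat i')) t \<le> H (\<kappa> (nat i)) t + 1" using P1 ir by (simp add: nat_less_iff)
    ultimately show ?thesis unfolding G_def using q_def q'_def i_def i'_def by simp
  qed
qed

lemma G_shift: "G (n + k * int m) t = G n t - k"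
proof -
  have m: "int m > 0" using mpos by simp
  have "(n + k * int m) mod int m = n mod int m" by simp
  moreover have "(n + k * int m) div int m = n div int m + k" using m by simp
  ultimately show ?thesis unfolding G_def by simp
qed

lemma G_nat: "i < m \<Longrightarrow> G (int i) = H (\<kappa> i)"
  by (auto simp: G_def fun_eq_iff)

lemma G_nat_m: "i < m \<Longrightarrow> G (int i + int m) t = H (\<kappa> i) t - 1"
  using G_shift[of "int i" 1 t] G_nat by simp

lemma G_0: "G n 0 = - (n div int m)"
  by (simp add: G_def)


lemma aV: "a \<in> I \<Longrightarrow> a \<in> V" using KIV by blast

lemma a_ne_k: "a \<in> I \<Longrightarrow> i < m \<Longrightarrow> a \<noteq> \<kappa> i" using kK IK by blast

lemma rel_shift1: "rel f (\<lambda>t. g t - 1) \<longleftrightarrow> rel g f"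
proof -
  have "\<And>i. (g i - 1 \<le> f i \<and> f i \<le> g i - 1 + 1) \<longleftrightarrow> (f i \<le> g i \<and> g i \<le> f i + 1)" by linarith
  then show ?thesis unfolding rel_def by simp
qed

lemma adjK: "a \<in> I \<Longrightarrow> i < m \<Longrightarrow> E a (\<kappa> i) \<longleftrightarrow> rel (H a) (G (int i)) \<or> rel (H a) (G (int i + int m))"
proof -
  assume a: "a \<in> I" and i: "i < m"
  have "E a (\<kappa> i) \<longleftrightarrow> rel (H a) (H (\<kappa> i)) \<or> rel (H (\<kappa> i)) (H a)"
    using adj[OF aV[OF a] _ a_ne_k[OF a i]] kK[OF i] KV by blast
  moreover have "G (int i + int m) = (\<lambda>t. H (\<kappa> i) t - 1)" using G_nat_m[OF i] by auto
  ultimately show ?thesis using G_nat[OF i] rel_shift1 by metis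
qed

lemma A_range: "rel (H a) (G n) \<Longrightarrow> 0 \<le> n \<and> n < 2 * int m"
proof -
  assume r: "rel (H a) (G n)"
  have "G n 0 \<le> 0 \<and> 0 \<le> G n 0 + 1" using r unfolding rel_def by (metis Hc_0)
  then have "0 \<le> n div int m \<and> n div int m \<le> 1" using G_0 by simp
  moreover have "int m > 0" using mpos by simp
  ultimately show ?thesis
  proof -
    assume h: "0 \<le> n div int m \<and> n div int m \<le> 1" "int m > 0"
    have e: "n = int m * (n div int m) + n mod int m" by simp
    have "0 \<le> n mod int m" "n mod int m < int m" using h(2) by auto
    moreover have "int m * (n div int m) \<le> int m * 1" using h by (simp add: mult_left_mono)
    moreover have "0 \<le> int m * (n div int m)" using h by simp
    ultimately show ?thesis using e by linarith
  qed
qed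


lemma convex:
  assumes "rel (H a) (G n)" "rel (H a) (G q)" "n \<le> p" "p \<le> q"
  shows "rel (H a) (G p)"
  unfolding rel_def
proof
  fix t
  have "G p t \<le> G n t" "G q t \<le> G p t" using G1 assms(3,4) by auto
  then show "G p t \<le> H a t \<and> H a t \<le> G p t + 1" using assms(1,2) unfolding rel_def
    by (meson add_right_mono order_trans)
qed

lemma no_m:
  assumes a: "a \<in> I" and r1: "rel (H a) (G n)" and r2: "rel (H a) (G (n + int m))"
  shows False
proof -
  have "0 \<le> n" "n + int m < 2 * int m" using A_range[OF r1] A_range[OF r2] by auto
  then obtain i where i: "n = int i" "i < m" by (metis nonneg_int_cases of_nat_less_iff mult_2 add_less_cancel_right)
  have g2: "G (n + int m) t = G n t - 1" for t using G_shift[of n 1 t] by simp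
  have "H a t = H (\<kappa> i) t" for t
    using r1 r2 g2[of t] G_nat[OF i(2)] i(1) unfolding rel_def
    by (metis add.commute diff_add_cancel dual_order.antisym)
  then show False using Hc_distinct[of a w "\<kappa> i"] a_ne_k[OF a i(2)] aV[OF a] setw by auto
qed

lemma nbhd:
  assumes a: "a \<in> I"
  shows "neighbourhood V E a = (\<lambda>n. \<kappa> (nat (n mod int m))) ` {n. rel (H a) (G n)}"
proof
  show "neighbourhood V E a \<subseteq> (\<lambda>n. \<kappa> (nat (n mod int m))) ` {n. rel (H a) (G n)}"
  proof
    fix x assume "x \<in> neighbourhood V E a"
    then have x: "x \<in> V" "E a x" by (auto simp: neighbourhood_def)
    have "x \<notin> I" using indep a x(2) by blast
    then have "x \<in> K" using x KIV by blast
    then obtain i where i: "i < m" "x = \<kappa> i" using bk by (auto simp: bij_betw_def)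
    then have "rel (H a) (G (int i)) \<or> rel (H a) (G (int i + int m))" using adjK a x(2) by blast
    moreover have "nat (int i mod int m) = i" "nat ((int i + int m) mod int m) = i" using i(1)
      by (simp_all add: nat_mod_as_int)
    ultimately show "x \<in> (\<lambda>n. \<kappa> (nat (n mod int m))) ` {n. rel (H a) (G n)}"
      using i(2) by (metis (mono_tags, lifting) image_eqI mem_Collect_eq)
  qed
next
  show "(\<lambda>n. \<kappa> (nat (n mod int m))) ` {n. rel (H a) (G n)} \<subseteq> neighbourhood V E a"
  proof
    fix x assume "x \<in> (\<lambda>n. \<kappa> (nat (n mod int m))) ` {n. rel (H a) (G n)}"
    then obtain n where n: "rel (H a) (G n)" "x = \<kappa> (nat (n mod int m))" by blast
    have m: "int m > 0" using mpos by simp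
    define i where "i = nat (n mod int m)"
    have i: "i < m" unfolding i_def using m by (simp add: nat_less_iff)
    have nr: "0 \<le> n" "n < 2 * int m" using A_range[OF n(1)] by auto
    have "n = int i \<or> n = int i + int m"
    proof (cases "n < int m")
      case True then show ?thesis unfolding i_def using nr by simp
    next
      case False
      have "n mod int m = (n - int m + int m) mod int m" by simp
      also have "\<dots> = (n - int m) mod int m" by (rule mod_add_self2)
      also have "\<dots> = n - int m" using nr False by (intro mod_pos_pos_trivial) auto
      finally have "n mod int m = n - int m" .
      then show ?thesis unfolding i_def using nr False by simp
    qed
    then have "E a (\<kappa> i)" using adjK[OF a i] n(1) by blast
    then show "x \<in> neighbourhood V E a" using n(2) EV unfolding i_def neighbourhood_def by blast
  qed
qed


lemma alpha:
  assumes a: "a \<in> I" and dg: "degree V E a = d" and d0: "0 < d"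
  shows "\<exists>\<alpha>. rel (H a) (G \<alpha>) \<and> rel (H a) (G (\<alpha> + int d - 1)) \<and>
           neighbourhood V E a = (\<lambda>n. \<kappa> (nat (n mod int m))) ` {\<alpha>..\<alpha> + int d - 1}"
proof -
  define A where "A = {n. rel (H a) (G n)}"
  define f where "f = (\<lambda>n. \<kappa> (nat (n mod int m)))"
  have m: "int m > 0" using mpos by simp
  have Ar: "A \<subseteq> {0..<2 * int m}" using A_range unfolding A_def by auto
  then have finA: "finite A" using finite_subset by blast
  have dm: "n \<in> A \<Longrightarrow> n div int m = 0 \<or> n div int m = 1" for n
  proof -
    assume "n \<in> A"
    then have "0 \<le> n" "n < 2 * int m" using Ar by auto
    then show ?thesis using div_range m by blast
  qed
  have injf: "inj_on f A"
  proof (rule inj_onI)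
    fix n n' assume nn: "n \<in> A" "n' \<in> A" "f n = f n'"
    have r: "0 \<le> n mod int m" "n mod int m < int m" "0 \<le> n' mod int m" "n' mod int m < int m"
      using m by auto
    have "nat (n mod int m) = nat (n' mod int m)"
      using kinj[of "nat (n mod int m)" "nat (n' mod int m)"] nn(3) r unfolding f_def
      by (simp add: nat_less_iff)
    then have rm: "n mod int m = n' mod int m" using r(1,3) by (metis nat_eq_iff2 int_nat_eq)
    have e1: "n = int m * (n div int m) + n mod int m" and e2: "n' = int m * (n' div int m) + n' mod int m"
      by simp_all
    show "n = n'"
    proof (rule ccontr)
      assume ne: "n \<noteq> n'"
      have qne: "n div int m \<noteq> n' div int m" using e1 e2 rm ne by metis
      define q where "q = n div int m"
      define q' where "q' = n' div int m"
      define r where "r = n mod int m"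
      have "n = int m * q + r" "n' = int m * q' + r" using e1 e2 rm unfolding q_def q'_def r_def by simp_all
      then have qq: "q \<noteq> q'" "q = 0 \<or> q = 1" "q' = 0 \<or> q' = 1"
        "n = int m * q + r" "n' = int m * q' + r"
        using dm[OF nn(1)] dm[OF nn(2)] qne unfolding q_def q'_def by simp_all
      then have "(q = 0 \<and> q' = 1) \<or> (q = 1 \<and> q' = 0)" by auto
      then have "n' = n + int m \<or> n = n' + int m" using qq(4,5) by auto
      then show False using no_m[OF a] nn(1,2) unfolding A_def by blast
    qed
  qed
  have NA: "neighbourhood V E a = f ` A" using nbhd[OF a] unfolding A_def f_def by simp
  have cA: "card A = d" using dg NA card_image[OF injf] unfolding degree_def by simp
  then have Ane: "A \<noteq> {}" using d0 by auto
  define \<alpha> where "\<alpha> = Min A"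
  define \<beta> where "\<beta> = Max A"
  have aA: "\<alpha> \<in> A" and bA: "\<beta> \<in> A" unfolding \<alpha>_def \<beta>_def using finA Ane by auto
  have Aeq: "A = {\<alpha>..\<beta>}"
  proof
    show "A \<subseteq> {\<alpha>..\<beta>}" unfolding \<alpha>_def \<beta>_def using finA by auto
    show "{\<alpha>..\<beta>} \<subseteq> A"
    proof
      fix p assume "p \<in> {\<alpha>..\<beta>}"
      then show "p \<in> A" using convex[of a \<alpha> \<beta> p] aA bA unfolding A_def by auto
    qed
  qed
  have "card {\<alpha>..\<beta>} = nat (\<beta> - \<alpha> + 1)" by simp
  then have "\<beta> = \<alpha> + int d - 1" using cA Aeq aA bA by auto
  then have "rel (H a) (G \<alpha>) \<and> rel (H a) (G (\<alpha> + int d - 1)) \<and>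
           neighbourhood V E a = (\<lambda>n. \<kappa> (nat (n mod int m))) ` {\<alpha>..\<alpha> + int d - 1}"
    using aA bA NA Aeq unfolding A_def f_def by auto
  then show ?thesis by blast
qed


lemma nb_mod:
  assumes "\<alpha> mod int m = \<alpha>' mod int m"
  shows "(\<lambda>n. \<kappa> (nat (n mod int m))) ` {\<alpha>..\<alpha> + c} = (\<lambda>n. \<kappa> (nat (n mod int m))) ` {\<alpha>'..\<alpha>' + c}"
proof -
  define k where "k = \<alpha>' div int m - \<alpha> div int m"
  have e1: "\<alpha> div int m * int m + \<alpha> mod int m = \<alpha>" by (rule div_mult_mod_eq)
  have e2: "\<alpha>' div int m * int m + \<alpha>' mod int m = \<alpha>'" by (rule div_mult_mod_eq)
  have ak: "\<alpha>' = \<alpha> + k * int m" unfolding k_def left_diff_distrib using e1 e2 assms by linarith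
  have "{\<alpha>'..\<alpha>' + c} = (\<lambda>n. n + k * int m) ` {\<alpha>..\<alpha> + c}"
  proof (rule set_eqI, rule iffI)
    fix x assume "x \<in> {\<alpha>'..\<alpha>' + c}"
    then have "x - k * int m \<in> {\<alpha>..\<alpha> + c}" using ak by simp
    moreover have "x = (x - k * int m) + k * int m" by simp
    ultimately show "x \<in> (\<lambda>n. n + k * int m) ` {\<alpha>..\<alpha> + c}" by (rule rev_image_eqI)
  next
    fix x assume "x \<in> (\<lambda>n. n + k * int m) ` {\<alpha>..\<alpha> + c}"
    then obtain n where "n \<in> {\<alpha>..\<alpha> + c}" "x = n + k * int m" by blast
    then show "x \<in> {\<alpha>'..\<alpha>' + c}" using ak by simp
  qed
  then have "(\<lambda>n. \<kappa> (nat (n mod int m))) ` {\<alpha>'..\<alpha>' + c} =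
      (\<lambda>n. \<kappa> (nat (n mod int m))) ` ((\<lambda>n. n + k * int m) ` {\<alpha>..\<alpha> + c})"
    by (simp only:)
  also have "\<dots> = (\<lambda>n. \<kappa> (nat ((n + k * int m) mod int m))) ` {\<alpha>..\<alpha> + c}"
    by (simp only: image_image)
  also have "\<dots> = (\<lambda>n. \<kappa> (nat (n mod int m))) ` {\<alpha>..\<alpha> + c}"
    by (simp only: mod_mult_self1)
  finally show ?thesis by (rule sym)
qed

lemma violation:
  assumes a: "a \<in> I" and b: "b \<in> I" and ab: "a \<noteq> b"
    and ra1: "rel (H a) (G \<alpha>)" and ra2: "rel (H a) (G (\<alpha> + int d - 1))"
    and rb1: "rel (H b) (G \<beta>)" and rb2: "rel (H b) (G (\<beta> + int d - 1))"
    and lo: "int m - int d + 1 \<le> (\<beta> - \<alpha>) mod int m" and hi: "(\<beta> - \<alpha>) mod int m \<le> int d - 1"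
  shows False
proof -
  define q where "q = (\<beta> - \<alpha>) div int m"
  define \<delta> where "\<delta> = (\<beta> - \<alpha>) mod int m"
  have e1: "(\<beta> - \<alpha>) div int m * int m + (\<beta> - \<alpha>) mod int m = \<beta> - \<alpha>" by (rule div_mult_mod_eq)
  have be: "\<beta> = (\<alpha> + \<delta>) + q * int m" unfolding q_def \<delta>_def using e1 by linarith
  have Gb1: "G \<beta> t = G (\<alpha> + \<delta>) t - q" for t by (simp only: be G_shift)
  have Gb2: "G (\<beta> + int d - 1) t = G (\<alpha> + \<delta> + int d - 1) t - q" for t
  proof -
    have e: "\<beta> + int d - 1 = (\<alpha> + \<delta> + int d - 1) + q * int m" using be by simp
    show ?thesis by (simp only: e G_shift)
  qed
  have ineq: "H b t + q \<le> H a t \<and> H a t \<le> H b t + q + 1" for t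
  proof -
    have "\<alpha> + 1 * int m \<le> \<alpha> + \<delta> + int d - 1" using lo unfolding \<delta>_def by simp
    then have "G (\<alpha> + \<delta> + int d - 1) t \<le> G (\<alpha> + 1 * int m) t"
      by (rule G1)
    also have "\<dots> = G \<alpha> t - 1" using G_shift[of \<alpha> 1 t] by simp
    finally have c1: "G (\<alpha> + \<delta> + int d - 1) t \<le> G \<alpha> t - 1" .
    have "\<alpha> + \<delta> \<le> \<alpha> + int d - 1" using hi unfolding \<delta>_def by simp
    then have c2: "G (\<alpha> + int d - 1) t \<le> G (\<alpha> + \<delta>) t" by (rule G1)
    have r: "G \<alpha> t \<le> H a t" "H a t \<le> G (\<alpha> + int d - 1) t + 1"
      "G \<beta> t \<le> H b t" "H b t \<le> G (\<beta> + int d - 1) t + 1"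
      using ra1 ra2 rb1 rb2 unfolding rel_def by auto
    show ?thesis using c1 c2 Gb1[of t] Gb2[of t] r by linarith
  qed
  have "q \<le> 0 \<and> 0 \<le> q + 1" using ineq[of 0] by simp
  then have "q = 0 \<or> q = -1" by auto
  then have "rel (H a) (H b) \<or> rel (H b) (H a)"
  proof
    assume q0: "q = 0" have "rel (H a) (H b)" unfolding rel_def
    proof
      fix i show "H b i \<le> H a i \<and> H a i \<le> H b i + 1" using ineq[of i] q0 by linarith
    qed
    then show ?thesis ..
  next
    assume q1: "q = -1" have "rel (H b) (H a)" unfolding rel_def
    proof
      fix i show "H a i \<le> H b i \<and> H b i \<le> H a i + 1" using ineq[of i] q1 by linarith
    qed
    then show ?thesis ..
  qed
  then have "E a b" using adj aV a b ab by blast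
  then show False using indep a b by blast
qed

lemma bound:
  assumes S: "S \<subseteq> I" and dS: "\<forall>v\<in>S. degree V E v = d" and inj: "inj_on (neighbourhood V E) S"
    and md1: "m + 1 < 2 * d" and md2: "d \<le> m - 1"
  shows "card S \<le> m - d + 1"
proof -
  have d0: "0 < d" using md1 by simp
  define P where "P = (\<lambda>a \<alpha>. rel (H a) (G \<alpha>) \<and> rel (H a) (G (\<alpha> + int d - 1)) \<and>
           neighbourhood V E a = (\<lambda>n. \<kappa> (nat (n mod int m))) ` {\<alpha>..\<alpha> + int d - 1})"
  define al where "al = (\<lambda>a. SOME \<alpha>. P a \<alpha>)"
  have Pal: "a \<in> S \<Longrightarrow> P a (al a)" for a
  proof -
    assume a: "a \<in> S"
    have "\<exists>\<alpha>. P a \<alpha>" unfolding P_def using alpha[of a d] a S dS d0 by blast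
    then show ?thesis unfolding al_def by (rule someI_ex)
  qed
  define u where "u = (\<lambda>a. al a mod int m)"
  have m0: "int m > 0" using mpos by simp
  have uS: "u ` S \<subseteq> {0..<int m}" unfolding u_def using m0 by auto
  have injS: "inj_on u S"
  proof (rule inj_onI)
    fix a b assume ab: "a \<in> S" "b \<in> S" "u a = u b"
    have "neighbourhood V E a = neighbourhood V E b"
      using Pal[OF ab(1)] Pal[OF ab(2)] nb_mod[of "al a" "al b" "int d - 1"] ab(3)
      unfolding P_def u_def by (simp add: add_diff_eq)
    then show "a = b" using inj ab(1,2) by (meson inj_onD)
  qed
  have pw: "\<forall>x\<in>u ` S. \<forall>y\<in>u ` S. \<not> ((int m - int d) + 1 \<le> (y - x) mod int m \<and>
              (y - x) mod int m \<le> int m - (int m - int d) - 1)"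
  proof (intro ballI)
    fix x y assume "x \<in> u ` S" "y \<in> u ` S"
    then obtain a b where ab: "a \<in> S" "b \<in> S" "x = u a" "y = u b" by blast
    show "\<not> ((int m - int d) + 1 \<le> (y - x) mod int m \<and> (y - x) mod int m \<le> int m - (int m - int d) - 1)"
    proof
      assume h: "(int m - int d) + 1 \<le> (y - x) mod int m \<and> (y - x) mod int m \<le> int m - (int m - int d) - 1"
      have e: "(y - x) mod int m = (al b - al a) mod int m"
        unfolding ab(3,4) u_def by (simp add: mod_diff_eq)
      show False
      proof (cases "a = b")
        case True
        then have "(y - x) mod int m = 0" using ab by simp
        then show False using h md2 by linarith
      next
        case False
        show False
          using violation[of a b "al a" d "al b"] Pal[OF ab(1)] Pal[OF ab(2)] ab(1,2) S False h e
          unfolding P_def by auto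
      qed
    qed
  qed
  have "card (u ` S) \<le> nat ((int m - int d) + 1)"
  proof (rule katona[OF uS _ _ pw])
    show "2 * (int m - int d) + 2 \<le> int m" using md1 by presburger
    show "0 \<le> int m - int d" using md2 by linarith
  qed
  moreover have "card (u ` S) = card S" using injS by (simp add: card_image)
  ultimately show ?thesis using md2 by linarith
qed

end




lemma conc0: "(\<And>x. x < n \<Longrightarrow> g x = []) \<Longrightarrow> concat (map g [0..<n]) = []"
  by (induction n) auto

lemma conc_split: "i < n \<Longrightarrow> concat (map g [0..<n]) = concat (map g [0..<i]) @ g i @ concat (map g [Suc i..<n])"
proof -
  assume "i < n"
  then have "[0..<n] = [0..<i] @ [i..<n]" using upt_add_eq_append[of 0 i "n - i"] by simp
  also have "[i..<n] = i # [Suc i..<n]" using \<open>i < n\<close> by (rule upt_conv_Cons)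
  finally have "[0..<n] = [0..<i] @ [i] @ [Suc i..<n]" by simp
  then show ?thesis by simp
qed

lemma conc_empty_range: "(\<And>x. a \<le> x \<Longrightarrow> x < b \<Longrightarrow> g x = []) \<Longrightarrow> concat (map g [a..<b]) = []"
  by (induction b) auto

lemma conc1: "i < n \<Longrightarrow> (\<And>x. x < n \<Longrightarrow> x \<noteq> i \<Longrightarrow> g x = []) \<Longrightarrow> concat (map g [0..<n]) = g i"
  using conc_split[of i n g] conc_empty_range[of 0 i g] conc_empty_range[of "Suc i" n g] by auto

lemma conc2: "i < j \<Longrightarrow> j < n \<Longrightarrow> (\<And>x. x < n \<Longrightarrow> x \<noteq> i \<Longrightarrow> x \<noteq> j \<Longrightarrow> g x = []) \<Longrightarrow>
   concat (map g [0..<n]) = g i @ g j"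
proof -
  assume ij: "i < j" "j < n" and z: "\<And>x. x < n \<Longrightarrow> x \<noteq> i \<Longrightarrow> x \<noteq> j \<Longrightarrow> g x = []"
  have "concat (map g [0..<n]) = concat (map g [0..<j]) @ g j @ concat (map g [Suc j..<n])"
    using conc_split ij by blast
  also have "concat (map g [0..<j]) = g i"
    using conc1[of i j g] ij z by auto
  also have "concat (map g [Suc j..<n]) = []" using conc_empty_range[of "Suc j" n g] z ij by auto
  finally show ?thesis by simp
qed

lemma filter_concat_map: "filter P (concat (map f xs)) = concat (map (\<lambda>x. filter P (f x)) xs)"
  by (induction xs) auto

locale cons =
  fixes m d :: nat
  assumes m4: "4 \<le> m" and md1: "m + 1 < 2 * d" and md2: "d \<le> m - 1"
begin

definition "g1 x = (if x \<le> m - d then [m + x] else []) @ [x]"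
definition "g2 s = [m + (m - d - s)]"
definition "g3 x = [x] @ (if d - 1 \<le> x then [m + (x - (d - 1))] else [])"
definition "g4 (x::nat) = [x]"
definition "ww = concat (map g1 [0..<m]) @ concat (map g2 [0..<Suc (m - d)]) @ concat (map g3 [0..<m]) @ concat (map g4 [0..<m])"

lemma fw: "filter Q ww = concat (map (\<lambda>x. filter Q (g1 x)) [0..<m]) @ concat (map (\<lambda>x. filter Q (g2 x)) [0..<Suc (m - d)])
   @ concat (map (\<lambda>x. filter Q (g3 x)) [0..<m]) @ concat (map (\<lambda>x. filter Q (g4 x)) [0..<m])"
  unfolding ww_def by (simp add: filter_concat_map)

end


context cons begin

lemma f1: "filter Q (g1 i) = (if i \<le> m - d \<and> Q (m + i) then [m + i] else []) @ (if Q i then [i] else [])"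
  unfolding g1_def by (cases "i \<le> m - d") auto
lemma f2: "filter Q (g2 s) = (if Q (m + (m - d - s)) then [m + (m - d - s)] else [])"
  unfolding g2_def by auto
lemma f3: "filter Q (g3 i) = (if Q i then [i] else []) @ (if d - 1 \<le> i \<and> Q (m + (i - (d - 1))) then [m + (i - (d - 1))] else [])"
  unfolding g3_def by (cases "d - 1 \<le> i") auto
lemma f4: "filter Q (g4 i) = (if Q i then [i] else [])"
  unfolding g4_def by auto

lemma case_KK:
  assumes xy: "x < y" "y < m"
  shows "filter (\<lambda>z. z = x \<or> z = y) ww = [x, y, x, y, x, y]"
proof -
  let ?Q = "\<lambda>z. z = x \<or> z = y"
  have "concat (map (\<lambda>i. filter ?Q (g1 i)) [0..<m]) = filter ?Q (g1 x) @ filter ?Q (g1 y)"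
    by (rule conc2) (use xy in \<open>auto simp: f1\<close>)
  then have 1: "concat (map (\<lambda>i. filter ?Q (g1 i)) [0..<m]) = [x, y]"
    using xy by (simp add: f1)
  have 2: "concat (map (\<lambda>i. filter ?Q (g2 i)) [0..<Suc (m - d)]) = []"
    by (rule conc0) (use xy in \<open>auto simp: f2\<close>)
  have "concat (map (\<lambda>i. filter ?Q (g3 i)) [0..<m]) = filter ?Q (g3 x) @ filter ?Q (g3 y)"
    by (rule conc2) (use xy in \<open>auto simp: f3\<close>)
  then have 3: "concat (map (\<lambda>i. filter ?Q (g3 i)) [0..<m]) = [x, y]"
    using xy by (simp add: f3)
  have "concat (map (\<lambda>i. filter ?Q (g4 i)) [0..<m]) = filter ?Q (g4 x) @ filter ?Q (g4 y)"
    by (rule conc2) (use xy in \<open>auto simp: f4\<close>)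
  then have 4: "concat (map (\<lambda>i. filter ?Q (g4 i)) [0..<m]) = [x, y]"
    using xy by (simp add: f4)
  show ?thesis using 1 2 3 4 fw[of ?Q] by simp
qed

lemma rm: "m - d < m" "d \<ge> 1" "d - 1 + (m - d) < m" using md1 md2 by auto

lemma case_II:
  assumes st: "s < t" "t \<le> m - d"
  shows "filter (\<lambda>z. z = m + s \<or> z = m + t) ww = [m + s, m + t, m + t, m + s, m + s, m + t]"
proof -
  let ?Q = "\<lambda>z. z = m + s \<or> z = m + t"
  have tm: "t < m" using st rm by linarith
  have "concat (map (\<lambda>i. filter ?Q (g1 i)) [0..<m]) = filter ?Q (g1 s) @ filter ?Q (g1 t)"
    by (rule conc2) (use st tm in \<open>auto simp: f1\<close>)
  then have 1: "concat (map (\<lambda>i. filter ?Q (g1 i)) [0..<m]) = [m + s, m + t]"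
    using st tm by (simp add: f1)
  have "concat (map (\<lambda>i. filter ?Q (g2 i)) [0..<Suc (m - d)]) = filter ?Q (g2 (m - d - t)) @ filter ?Q (g2 (m - d - s))"
    by (rule conc2) (use st tm in \<open>auto simp: f2\<close>)
  then have 2: "concat (map (\<lambda>i. filter ?Q (g2 i)) [0..<Suc (m - d)]) = [m + t, m + s]"
    using st tm by (simp add: f2)
  have "concat (map (\<lambda>i. filter ?Q (g3 i)) [0..<m]) = filter ?Q (g3 (s + (d - 1))) @ filter ?Q (g3 (t + (d - 1)))"
    by (rule conc2) (use st tm rm in \<open>auto simp: f3\<close>)
  moreover have "t + (d - 1) < m" "s + (d - 1) < m" using st rm by linarith+
  ultimately have 3: "concat (map (\<lambda>i. filter ?Q (g3 i)) [0..<m]) = [m + s, m + t]"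
    using st tm by (simp add: f3)
  have 4: "concat (map (\<lambda>i. filter ?Q (g4 i)) [0..<m]) = []"
    by (rule conc0) (auto simp: f4)
  show ?thesis using 1 2 3 4 fw[of ?Q] by simp
qed

lemma case_aK:
  assumes s: "s \<le> m - d" and x: "x < m"
  shows "filter (\<lambda>z. z = m + s \<or> z = x) ww =
     (if x < s then [x, m + s] else [m + s, x]) @ [m + s] @
     (if x \<le> s + (d - 1) then [x, m + s] else [m + s, x]) @ [x]"
proof -
  let ?Q = "\<lambda>z. z = m + s \<or> z = x"
  have sm: "s < m" using s rm by linarith
  have 1: "concat (map (\<lambda>i. filter ?Q (g1 i)) [0..<m]) = (if x < s then [x, m + s] else [m + s, x])"
  proof (cases "x < s")
    case True
    have "concat (map (\<lambda>i. filter ?Q (g1 i)) [0..<m]) = filter ?Q (g1 x) @ filter ?Q (g1 s)"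
      by (rule conc2) (use True sm x in \<open>auto simp: f1\<close>)
    then show ?thesis using True s x by (simp add: f1)
  next
    case False
    show ?thesis
    proof (cases "x = s")
      case True
      have "concat (map (\<lambda>i. filter ?Q (g1 i)) [0..<m]) = filter ?Q (g1 s)"
        by (rule conc1) (use True sm x in \<open>auto simp: f1\<close>)
      then show ?thesis using True s x by (simp add: f1)
    next
      case False2: False
      have "concat (map (\<lambda>i. filter ?Q (g1 i)) [0..<m]) = filter ?Q (g1 s) @ filter ?Q (g1 x)"
        by (rule conc2) (use False False2 sm x in \<open>auto simp: f1\<close>)
      then show ?thesis using False False2 s x by (simp add: f1)
    qed
  qed
  have "concat (map (\<lambda>i. filter ?Q (g2 i)) [0..<Suc (m - d)]) = filter ?Q (g2 (m - d - s))"
    by (rule conc1) (use s x in \<open>auto simp: f2\<close>)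
  then have 2: "concat (map (\<lambda>i. filter ?Q (g2 i)) [0..<Suc (m - d)]) = [m + s]"
    using s x by (simp add: f2)
  define e where "e = s + (d - 1)"
  have em: "e < m" unfolding e_def using s rm(3) by linarith
  have ee: "e - (d - 1) = s" "d - 1 \<le> e" unfolding e_def by auto
  have eu: "d - 1 \<le> i \<Longrightarrow> i - (d - 1) = s \<Longrightarrow> i = e" for i unfolding e_def by auto
  have h3x: "filter ?Q (g3 i) = (if i = x then [x] else [])" if "i \<noteq> e" "i < m" for i
    using eu[of i] that x unfolding f3 by auto
  have h3e: "filter ?Q (g3 e) = (if x = e then [x] else []) @ [m + s]"
    using ee x em unfolding f3 by auto
  have 3: "concat (map (\<lambda>i. filter ?Q (g3 i)) [0..<m]) = (if x \<le> s + (d - 1) then [x, m + s] else [m + s, x])"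
  proof (cases "x < e")
    case True
    have "concat (map (\<lambda>i. filter ?Q (g3 i)) [0..<m]) = filter ?Q (g3 x) @ filter ?Q (g3 e)"
      by (rule conc2) (use True em x h3x in \<open>auto\<close>)
    then show ?thesis using True h3x[of x] h3e x unfolding e_def by simp
  next
    case False
    show ?thesis
    proof (cases "x = e")
      case True
      have "concat (map (\<lambda>i. filter ?Q (g3 i)) [0..<m]) = filter ?Q (g3 e)"
        by (rule conc1) (use True em x h3x in \<open>auto\<close>)
      then show ?thesis using True h3e unfolding e_def by simp
    next
      case False2: False
      have "concat (map (\<lambda>i. filter ?Q (g3 i)) [0..<m]) = filter ?Q (g3 e) @ filter ?Q (g3 x)"
        by (rule conc2) (use False False2 em x h3x in \<open>auto\<close>)
      then show ?thesis using False False2 h3x[of x] h3e x unfolding e_def by simp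
    qed
  qed
  have "concat (map (\<lambda>i. filter ?Q (g4 i)) [0..<m]) = filter ?Q (g4 x)"
    by (rule conc1) (use x in \<open>auto simp: f4\<close>)
  then have 4: "concat (map (\<lambda>i. filter ?Q (g4 i)) [0..<m]) = [x]"
    using x by (simp add: f4)
  show ?thesis using 1 2 3 4 fw[of ?Q] by simp
qed

lemma alt_altl: "alternate_in w x y \<longleftrightarrow> altl (filter (\<lambda>z. z = x \<or> z = y) w)"
  by (simp add: alternate_in_def altl_def Let_def)

lemma alt_sym: "alternate_in w x y \<longleftrightarrow> alternate_in w y x"
  unfolding alternate_in_def by (simp add: disj_commute)

lemma alt_KK: "x < m \<Longrightarrow> y < m \<Longrightarrow> x \<noteq> y \<Longrightarrow> alternate_in ww x y"
proof -
  assume h: "x < m" "y < m" "x \<noteq> y"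
  have "x < y \<Longrightarrow> y < m \<Longrightarrow> alternate_in ww x y" for x y
    using case_KK[of x y] unfolding alt_altl by auto
  then show ?thesis using h alt_sym by (metis linorder_neqE_nat)
qed

lemma nalt_II: "s \<le> m - d \<Longrightarrow> t \<le> m - d \<Longrightarrow> s \<noteq> t \<Longrightarrow> \<not> alternate_in ww (m + s) (m + t)"
proof -
  assume h: "s \<le> m - d" "t \<le> m - d" "s \<noteq> t"
  have "s < t \<Longrightarrow> t \<le> m - d \<Longrightarrow> \<not> alternate_in ww (m + s) (m + t)" for s t
    using case_II[of s t] unfolding alt_altl by auto
  then show ?thesis using h alt_sym by (metis linorder_neqE_nat)
qed

lemma alt_aK: "s \<le> m - d \<Longrightarrow> x < m \<Longrightarrow> alternate_in ww (m + s) x \<longleftrightarrow> s \<le> x \<and> x \<le> s + (d - 1)"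
  unfolding alt_altl using case_aK[of s x] by auto

definition "VV = {..<Suc (m + (m - d))}"
definition "KK = {..<m}"
definition "II = {m..m + (m - d)}"
definition "EE u v = (u \<in> VV \<and> v \<in> VV \<and> u \<noteq> v \<and> alternate_in ww u v)"

lemma set_ww: "set ww = VV"
proof
  show "set ww \<subseteq> VV"
  proof
    fix y assume "y \<in> set ww"
    then have "(\<exists>x<m. y \<in> set (g1 x)) \<or> (\<exists>x<Suc (m - d). y \<in> set (g2 x)) \<or>
               (\<exists>x<m. y \<in> set (g3 x)) \<or> (\<exists>x<m. y \<in> set (g4 x))"
      unfolding ww_def by auto
    then show "y \<in> VV"
      unfolding VV_def g1_def g2_def g3_def g4_def using rm by (auto split: if_splits)
  qed
next
  show "VV \<subseteq> set ww"
  proof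
    fix y assume "y \<in> VV"
    then have y: "y < Suc (m + (m - d))" unfolding VV_def by simp
    show "y \<in> set ww"
    proof (cases "y < m")
      case True
      then have "y \<in> set (concat (map g4 [0..<m]))" unfolding g4_def by auto
      then show ?thesis unfolding ww_def by auto
    next
      case False
      define s where "s = y - m"
      have s: "s \<le> m - d" "y = m + s" using y False unfolding s_def by auto
      have "g2 (m - d - s) = [y]" unfolding g2_def using s by auto
      moreover have "m - d - s \<in> set [0..<Suc (m - d)]" by (simp only: set_upt atLeastLessThan_iff) arith
      then have "g2 (m - d - s) \<in> set (map g2 [0..<Suc (m - d)])" unfolding set_map by (rule imageI)
      ultimately have "y \<in> set (concat (map g2 [0..<Suc (m - d)]))"
        by (metis list.set_intros(1) set_concat UN_I)
      then show ?thesis unfolding ww_def by auto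
    qed
  qed
qed

lemma nb: "s \<le> m - d \<Longrightarrow> neighbourhood VV EE (m + s) = {s..s + (d - 1)}"
proof -
  assume s: "s \<le> m - d"
  have sd: "s + (d - 1) < m" using s rm(3) by linarith
  show ?thesis
  proof (rule set_eqI)
    fix u
    show "u \<in> neighbourhood VV EE (m + s) \<longleftrightarrow> u \<in> {s..s + (d - 1)}"
    proof (cases "u < m")
      case True
      then show ?thesis using alt_aK[OF s True] s sd
        unfolding neighbourhood_def EE_def VV_def by auto
    next
      case False
      have "\<not> EE (m + s) u"
      proof
        assume h: "EE (m + s) u"
        then have "u < Suc (m + (m - d))" "u \<noteq> m + s" "alternate_in ww (m + s) u" unfolding EE_def VV_def by auto
        moreover obtain t where "u = m + t" using False by (metis le_add_diff_inverse not_less)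
        ultimately show False using nalt_II[OF s, of t] by auto
      qed
      then show ?thesis using False sd unfolding neighbourhood_def by auto
    qed
  qed
qed

lemma exists:
  "\<exists>(V :: nat set) E I K S.
            split_graph V E I K \<and> card K = m \<and> word_representable V E \<and>
            S \<subseteq> I \<and> (\<forall>v\<in>S. degree V E v = d) \<and> inj_on (neighbourhood V E) S
            \<and> card S = m - d + 1"
proof (intro exI conjI)
  have sg: "simple_graph VV EE"
    unfolding simple_graph_def EE_def VV_def by (auto intro: alt_sym[THEN iffD1])
  have cl: "is_clique VV EE KK"
    unfolding is_clique_def EE_def KK_def VV_def using alt_KK by auto
  have mx: "\<forall>v\<in>VV - KK. \<not> (\<forall>x\<in>KK. EE v x)"
  proof
    fix v assume v: "v \<in> VV - KK"
    then obtain s where s: "v = m + s" "s \<le> m - d" unfolding VV_def KK_def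
      by (metis Diff_iff le_add_diff_inverse lessThan_iff less_Suc_eq_le not_less add_le_cancel_left)
    show "\<not> (\<forall>x\<in>KK. EE v x)"
    proof (cases "s = 0")
      case True
      have "m - 1 \<in> KK" unfolding KK_def using rm by auto
      moreover have "\<not> EE v (m - 1)" using alt_aK[OF s(2), of "m - 1"] True s(1) md2 rm
        unfolding EE_def by auto
      ultimately show ?thesis by blast
    next
      case False
      have "0 \<in> KK" unfolding KK_def using rm by auto
      moreover have "\<not> EE v 0" using alt_aK[OF s(2), of 0] False s(1) rm
        unfolding EE_def by auto
      ultimately show ?thesis by blast
    qed
  qed
  have ind: "is_independent VV EE II"
    unfolding is_independent_def
  proof
    show "II \<subseteq> VV" unfolding II_def VV_def by auto
    show "\<forall>x\<in>II. \<forall>y\<in>II. \<not> EE x y"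
    proof (intro ballI)
      fix x y assume "x \<in> II" "y \<in> II"
      then obtain s t where "x = m + s" "y = m + t" "s \<le> m - d" "t \<le> m - d" unfolding II_def
        by (metis atLeastAtMost_iff le_add_diff_inverse add_le_cancel_left)
      then show "\<not> EE x y" using nalt_II unfolding EE_def by (cases "s = t") auto
    qed
  qed
  show "split_graph VV EE II KK"
    unfolding split_graph_def is_maximal_clique_def
    using sg cl mx ind by (auto simp: KK_def II_def VV_def)
  show "card KK = m" unfolding KK_def by simp
  show "word_representable VV EE"
    unfolding word_representable_def word_represents_def
    by (rule exI[of _ ww]) (auto simp: set_ww EE_def)
  show "II \<subseteq> II" by simp
  show "\<forall>v\<in>II. degree VV EE v = d"
  proof
    fix v assume "v \<in> II"
    then obtain s where "v = m + s" "s \<le> m - d" unfolding II_def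
      by (metis atLeastAtMost_iff le_add_diff_inverse add_le_cancel_left)
    then show "degree VV EE v = d" using nb rm unfolding degree_def by auto
  qed
  show "inj_on (neighbourhood VV EE) II"
  proof (rule inj_onI)
    fix x y assume "x \<in> II" "y \<in> II" "neighbourhood VV EE x = neighbourhood VV EE y"
    moreover obtain s t where "x = m + s" "y = m + t" "s \<le> m - d" "t \<le> m - d"
      using calculation(1,2) unfolding II_def
      by (metis atLeastAtMost_iff le_add_diff_inverse add_le_cancel_left)
    ultimately have "{s..s + (d - 1)} = {t..t + (d - 1)}" using nb by auto
    then have "s = t" by (metis atLeastAtMost_iff le_add1 order.antisym order_refl)
    then show "x = y" using \<open>x = m + s\<close> \<open>y = m + t\<close> by simp
  qed
  show "card II = m - d + 1" unfolding II_def by simp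
qed

end


theorem theorem13:
  fixes m d :: nat
  assumes "m \<ge> 4" and "m + 1 < 2 * d" and "d \<le> m - 1"
  shows "(\<forall>(V :: 'a set) E I K S.
            split_graph V E I K \<and> card K = m \<and> word_representable V E \<and>
            S \<subseteq> I \<and> (\<forall>v\<in>S. degree V E v = d) \<and> inj_on (neighbourhood V E) S
            \<longrightarrow> card S \<le> m - d + 1)
       \<and> (\<exists>(V :: nat set) E I K S.
            split_graph V E I K \<and> card K = m \<and> word_representable V E \<and>
            S \<subseteq> I \<and> (\<forall>v\<in>S. degree V E v = d) \<and> inj_on (neighbourhood V E) S
            \<and> card S = m - d + 1)"
proof (rule conjI)
  show "\<forall>(V :: 'a set) E I K S.
            split_graph V E I K \<and> card K = m \<and> word_representable V E \<and>
            S \<subseteq> I \<and> (\<forall>v\<in>S. degree V E v = d) \<and> inj_on (neighbourhood V E) S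
            \<longrightarrow> card S \<le> m - d + 1"
  proof (intro allI impI)
    fix V :: "'a set" and E I K S
    assume h: "split_graph V E I K \<and> card K = m \<and> word_representable V E \<and>
            S \<subseteq> I \<and> (\<forall>v\<in>S. degree V E v = d) \<and> inj_on (neighbourhood V E) S"
    then have sp: "split_graph V E I K" and cK: "card K = m" and wrp: "word_representable V E"
      and S: "S \<subseteq> I" and dS: "\<forall>v\<in>S. degree V E v = d" and inj: "inj_on (neighbourhood V E) S"
      by auto
    obtain w where w: "word_represents V E w" using wrp unfolding word_representable_def by blast
    have sg: "simple_graph V E" using sp unfolding split_graph_def by simp
    interpret wr V E w using sg w by unfold_locales
    have KV: "K \<subseteq> V" and cl: "\<forall>x\<in>K. \<forall>y\<in>K. x \<noteq> y \<longrightarrow> E x y"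
      using sp unfolding split_graph_def is_maximal_clique_def is_clique_def by auto
    have IK: "K \<inter> I = {}" and KIV: "K \<union> I = V" and ind: "\<forall>x\<in>I. \<forall>y\<in>I. \<not> E x y"
      using sp unfolding split_graph_def is_independent_def by auto
    obtain \<kappa> where bk: "bij_betw \<kappa> {..<m} K" and ord: "\<forall>i j. i < j \<longrightarrow> j < m \<longrightarrow> rel (H (\<kappa> i)) (H (\<kappa> j))"
      using labeling[OF KV cl cK] by blast
    interpret sctx V E w K I m \<kappa>
      using KV IK KIV ind bk ord assms(1) by unfold_locales auto
    show "card S \<le> m - d + 1" using bound[OF S dS inj assms(2,3)] .
  qed
next
  interpret cons m d using assms by unfold_locales
  show "\<exists>(V :: nat set) E I K S.
            split_graph V E I K \<and> card K = m \<and> word_representable V E \<and>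
            S \<subseteq> I \<and> (\<forall>v\<in>S. degree V E v = d) \<and> inj_on (neighbourhood V E) S
            \<and> card S = m - d + 1" by (rule exists)
qed

end
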